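(* Away from characteristic points of a regular surface $\Sigma\subset\mathbb{M}$, the mean curvature $\mathcal H_{\nabla^{2,\alpha},L}:=\mathrm{tr}\,II^{\nabla^{2,\alpha},L}$ satisfies $$\lim_{L\to+\infty}\mathcal H_{\nabla^{2,\alpha},L}=X_1(\bar p)+X_2(\bar q)-(1-\alpha)\bar p.$$
   Context: The affine group $\mathbb{M}$ is modeled on $\{(x_1,x_2,x_3)\in\mathbb{R}^3: x_1>0\}$ with product $(m,n,s)\star(\lambda,\mu,\nu)=(m\lambda,m\mu+n,\nu+s)$. Put $X_1=x_1\partial_{x_1}$, $X_2=x_1\partial_{x_2}+\partial_{x_3}$, $X_3=x_1\partial_{x_2}$, with dual coframe $\omega_1=\frac1{x_1}dx_1$, $\omega_2=dx_3$, $\omega=\frac1{x_1}dx_2-dx_3$. For a constant $L>0$, $g_L=\omega_1\otimes\omega_1+\omega_2\otimes\omega_2+L\,\omega\otimes\omega$, so $X_1,X_2,\widetilde X_3:=L^{-1/2}X_3$ is $g_L$-orthonormal; $\langle\cdot,\cdot\rangle_L$ denotes $g_L$ and $\nabla$ its Levi-Civita connection. Let $H_2=\mathrm{span}\{X_2,X_3\}$, and let $P^2$, $P^{2,\perp}$ be the $g_L$-orthogonal projections onto $H_2$ and onto $\mathrm{span}\{X_1\}$. For a real constant $\alpha$, $\nabla^{2,\alpha}_XY=(1-\alpha)\nabla_XY+\alpha P^2\nabla_X(P^2Y)+\alpha P^{2,\perp}\nabla_X(P^{2,\perp}Y)$. A regular surface is a Euclidean $C^2$-smooth compact oriented surface $\Sigma=\{u=0\}$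 with $u$ Euclidean $C^2$ and nonvanishing Euclidean gradient. $\nabla_Hu=X_1(u)X_1+X_2(u)X_2$; characteristic points are those with $\nabla_Hu=0$. Put $p=X_1u$, $q=X_2u$, $r=\widetilde X_3u$, $l=\sqrt{p^2+q^2}$, $l_L=\sqrt{p^2+q^2+r^2}$, $\bar p=p/l$, $\bar q=q/l$, $\bar p_L=p/l_L$, $\bar q_L=q/l_L$, $\bar r_L=r/l_L$; $v_L=\bar p_LX_1+\bar q_LX_2+\bar r_L\widetilde X_3$, $e_1=\bar qX_1-\bar pX_2$, $e_2=\bar r_L\bar pX_1+\bar r_L\bar qX_2-\frac{l}{l_L}\widetilde X_3$. The second fundamental form is $II^{\nabla^{2,\alpha},L}=(\langle\nabla^{2,\alpha}_{e_i}v_L,e_j\rangle_L)_{i,j=1,2}$. *)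

theory Defs
  imports "HOL-Analysis.Analysis"
begin

type_synonym pt = "real^3"
type_synonym vfield = "real^3 \<Rightarrow> real^3"

text \<open>The affine group M as the open half space x1 > 0 of R^3.
  Vectors are written in the Euclidean basis d/dx1, d/dx2, d/dx3.\<close>
definition Mgrp :: "pt set" where "Mgrp = {x. x$1 > 0}"

definition dirD :: "(pt \<Rightarrow> 'b::real_normed_vector) \<Rightarrow> pt \<Rightarrow> pt \<Rightarrow> 'b" where
  "dirD f x v = frechet_derivative f (at x) v"

definition pd :: "3 \<Rightarrow> (pt \<Rightarrow> real) \<Rightarrow> pt \<Rightarrow> real" where
  "pd i f x = dirD f x (axis i 1)"

definition egrad :: "(pt \<Rightarrow> real) \<Rightarrow> pt \<Rightarrow> real^3" where
  "egrad f x = (\<chi> i. pd i f x)"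

definition C2_on :: "pt set \<Rightarrow> (pt \<Rightarrow> real) \<Rightarrow> bool" where
  "C2_on S f \<longleftrightarrow> (\<forall>x\<in>S. f differentiable (at x) \<and> (\<forall>i. pd i f differentiable (at x)))
      \<and> (\<forall>i j. continuous_on S (pd j (pd i f)))"

definition bracket :: "vfield \<Rightarrow> vfield \<Rightarrow> vfield" where
  "bracket X Y x = dirD Y x (X x) - dirD X x (Y x)"

definition X1 :: vfield where "X1 x = vector [x$1, 0, 0]"
definition X2 :: vfield where "X2 x = vector [0, x$1, 1]"
definition X3 :: vfield where "X3 x = vector [0, x$1, 0]"
definition X3t :: "real \<Rightarrow> vfield" where "X3t L x = (1 / sqrt L) *\<^sub>R X3 x"

text \<open>The metric g_L = w1*w1 + w2*w2 + L w*w with w1 = dx1/x1, w2 = dx3, w = dx2/x1 - dx3.\<close>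
definition gL :: "real \<Rightarrow> pt \<Rightarrow> real^3 \<Rightarrow> real^3 \<Rightarrow> real" where
  "gL L x v w = (v$1 / x$1) * (w$1 / x$1) + v$3 * w$3
      + L * (v$2 / x$1 - v$3) * (w$2 / x$1 - w$3)"

text \<open>g_L-orthonormal frame E1 = X1, E2 = X2, E3 = X3 tilde.\<close>
definition Efr :: "real \<Rightarrow> nat \<Rightarrow> vfield" where
  "Efr L k = (if k = 1 then X1 else if k = 2 then X2 else X3t L)"

text \<open>Levi-Civita connection of g_L, given by the Koszul formula, expanded in the
  g_L-orthonormal frame.\<close>
definition koszul :: "real \<Rightarrow> vfield \<Rightarrow> vfield \<Rightarrow> vfield \<Rightarrow> pt \<Rightarrow> real" where
  "koszul L X Y Z x = (1/2) *
     ( dirD (\<lambda>y. gL L y (Y y) (Z y)) x (X x)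
     + dirD (\<lambda>y. gL L y (Z y) (X y)) x (Y x)
     - dirD (\<lambda>y. gL L y (X y) (Y y)) x (Z x)
     + gL L x (bracket X Y x) (Z x)
     - gL L x (bracket Y Z x) (X x)
     + gL L x (bracket Z X x) (Y x))"

definition LC :: "real \<Rightarrow> vfield \<Rightarrow> vfield \<Rightarrow> vfield" where
  "LC L X Y x = (\<Sum>k\<in>{1,2,3}. koszul L X Y (Efr L k) x *\<^sub>R Efr L k x)"

definition P2 :: "real \<Rightarrow> pt \<Rightarrow> real^3 \<Rightarrow> real^3" where
  "P2 L x v = gL L x v (X2 x) *\<^sub>R X2 x + gL L x v (X3t L x) *\<^sub>R X3t L x"

definition P2perp :: "real \<Rightarrow> pt \<Rightarrow> real^3 \<Rightarrow> real^3" where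
  "P2perp L x v = gL L x v (X1 x) *\<^sub>R X1 x"

definition conn2 :: "real \<Rightarrow> real \<Rightarrow> vfield \<Rightarrow> vfield \<Rightarrow> vfield" where
  "conn2 \<alpha> L X Y x = (1 - \<alpha>) *\<^sub>R LC L X Y x
      + \<alpha> *\<^sub>R P2 L x (LC L X (\<lambda>y. P2 L y (Y y)) x)
      + \<alpha> *\<^sub>R P2perp L x (LC L X (\<lambda>y. P2perp L y (Y y)) x)"

definition hgrad :: "(pt \<Rightarrow> real) \<Rightarrow> vfield" where
  "hgrad u x = dirD u x (X1 x) *\<^sub>R X1 x + dirD u x (X2 x) *\<^sub>R X2 x"

definition pp :: "(pt \<Rightarrow> real) \<Rightarrow> pt \<Rightarrow> real" where "pp u x = dirD u x (X1 x)"
definition qq :: "(pt \<Rightarrow> real) \<Rightarrow> pt \<Rightarrow> real" where "qq u x = dirD u x (X2 x)"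
definition rr :: "real \<Rightarrow> (pt \<Rightarrow> real) \<Rightarrow> pt \<Rightarrow> real" where "rr L u x = dirD u x (X3t L x)"
definition ll :: "(pt \<Rightarrow> real) \<Rightarrow> pt \<Rightarrow> real" where
  "ll u x = sqrt ((pp u x)\<^sup>2 + (qq u x)\<^sup>2)"
definition llL :: "real \<Rightarrow> (pt \<Rightarrow> real) \<Rightarrow> pt \<Rightarrow> real" where
  "llL L u x = sqrt ((pp u x)\<^sup>2 + (qq u x)\<^sup>2 + (rr L u x)\<^sup>2)"

definition pbar :: "(pt \<Rightarrow> real) \<Rightarrow> pt \<Rightarrow> real" where "pbar u x = pp u x / ll u x"
definition qbar :: "(pt \<Rightarrow> real) \<Rightarrow> pt \<Rightarrow> real" where "qbar u x = qq u x / ll u x"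
definition pbarL :: "real \<Rightarrow> (pt \<Rightarrow> real) \<Rightarrow> pt \<Rightarrow> real" where "pbarL L u x = pp u x / llL L u x"
definition qbarL :: "real \<Rightarrow> (pt \<Rightarrow> real) \<Rightarrow> pt \<Rightarrow> real" where "qbarL L u x = qq u x / llL L u x"
definition rbarL :: "real \<Rightarrow> (pt \<Rightarrow> real) \<Rightarrow> pt \<Rightarrow> real" where "rbarL L u x = rr L u x / llL L u x"

definition vL :: "real \<Rightarrow> (pt \<Rightarrow> real) \<Rightarrow> vfield" where
  "vL L u x = pbarL L u x *\<^sub>R X1 x + qbarL L u x *\<^sub>R X2 x + rbarL L u x *\<^sub>R X3t L x"

definition e1 :: "(pt \<Rightarrow> real) \<Rightarrow> vfield" where
  "e1 u x = qbar u x *\<^sub>R X1 x - pbar u x *\<^sub>R X2 x"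

definition e2 :: "real \<Rightarrow> (pt \<Rightarrow> real) \<Rightarrow> vfield" where
  "e2 L u x = (rbarL L u x * pbar u x) *\<^sub>R X1 x + (rbarL L u x * qbar u x) *\<^sub>R X2 x
      - (ll u x / llL L u x) *\<^sub>R X3t L x"

definition eframe :: "real \<Rightarrow> (pt \<Rightarrow> real) \<Rightarrow> nat \<Rightarrow> vfield" where
  "eframe L u i = (if i = 1 then e1 u else e2 L u)"

definition IIf :: "real \<Rightarrow> real \<Rightarrow> (pt \<Rightarrow> real) \<Rightarrow> nat \<Rightarrow> nat \<Rightarrow> pt \<Rightarrow> real" where
  "IIf \<alpha> L u i j x = gL L x (conn2 \<alpha> L (eframe L u i) (vL L u) x) (eframe L u j x)"

definition Hcurv :: "real \<Rightarrow> real \<Rightarrow> (pt \<Rightarrow> real) \<Rightarrow> pt \<Rightarrow> real" where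
  "Hcurv \<alpha> L u x = IIf \<alpha> L u 1 1 x + IIf \<alpha> L u 2 2 x"

end

theory Submission imports Defs begin


definition comb :: "real \<Rightarrow> pt \<Rightarrow> real \<Rightarrow> real \<Rightarrow> real \<Rightarrow> real^3" where
  "comb L x a b c = a *\<^sub>R X1 x + b *\<^sub>R X2 x + c *\<^sub>R X3t L x"

lemma comb_nth:
  "comb L x a b c $ 1 = a * x$1"
  "comb L x a b c $ 2 = b * x$1 + c * x$1 / sqrt L"
  "comb L x a b c $ 3 = b"
  by (simp_all add: comb_def X1_def X2_def X3t_def X3_def)

lemma gL_comb:
  assumes "x$1 \<noteq> 0" "L > 0"
  shows "gL L x (comb L x a b c) (comb L x a' b' c') = a*a' + b*b' + c*c'"
  using assms unfolding gL_def comb_nth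
  by (simp add: field_simps)

lemma vec_nth_has_derivative[derivative_intros]:
  "(Y has_derivative DY) F \<Longrightarrow> ((\<lambda>y. Y y $ i) has_derivative (\<lambda>v. DY v $ i)) F"
  using bounded_linear.has_derivative[OF bounded_linear_vec_nth] by blast

definition dG :: "real \<Rightarrow> pt \<Rightarrow> real^3 \<Rightarrow> real^3 \<Rightarrow> real^3 \<Rightarrow> real" where
  "dG L x w v z = w$1 * (-2 * v$1 * z$1 / (x$1)^3
      + L * ((- v$2 / (x$1)^2) * (z$2 / x$1 - z$3) + (v$2 / x$1 - v$3) * (- z$2 / (x$1)^2)))"

lemma gL_has_derivative:
  assumes "(Y has_derivative DY) (at x)" "(Z has_derivative DZ) (at x)" "x$1 \<noteq> 0"
  shows "((\<lambda>y. gL L y (Y y) (Z y)) has_derivative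
     (\<lambda>v. dG L x v (Y x) (Z x) + gL L x (DY v) (Z x) + gL L x (Y x) (DZ v))) (at x)"
  unfolding gL_def
  apply (rule derivative_eq_intros refl assms has_derivative_id | simp add: assms)+
  apply (rule ext)
  apply (simp add: dG_def gL_def field_simps assms power2_eq_square power3_eq_cube)
  done

lemma gL_sym: "gL L x v w = gL L x w v"
  by (simp add: gL_def algebra_simps)
lemma gL_diff_left: "gL L x (a - b) c = gL L x a c - gL L x b c"
  by (simp add: gL_def algebra_simps diff_divide_distrib)
lemma dG_sym: "dG L x w v z = dG L x w z v"
  by (simp add: dG_def algebra_simps)

lemma koszul_eq:
  assumes X: "(X has_derivative DX) (at x)" and Y: "(Y has_derivative DY) (at x)"
    and Z: "(Z has_derivative DZ) (at x)" and x: "x$1 \<noteq> 0"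
  shows "koszul L X Y Z x = gL L x (DY (X x)) (Z x)
     + (1/2) * (dG L x (X x) (Y x) (Z x) + dG L x (Y x) (Z x) (X x) - dG L x (Z x) (X x) (Y x))"
proof -
  note fa = frechet_derivative_at[symmetric]
  have e1: "dirD (\<lambda>y. gL L y (Y y) (Z y)) x v = dG L x v (Y x) (Z x) + gL L x (DY v) (Z x) + gL L x (Y x) (DZ v)" for v
    unfolding dirD_def fa[OF gL_has_derivative[OF Y Z x]] by simp
  have e2: "dirD (\<lambda>y. gL L y (Z y) (X y)) x v = dG L x v (Z x) (X x) + gL L x (DZ v) (X x) + gL L x (Z x) (DX v)" for v
    unfolding dirD_def fa[OF gL_has_derivative[OF Z X x]] by simp
  have e3: "dirD (\<lambda>y. gL L y (X y) (Y y)) x v = dG L x v (X x) (Y x) + gL L x (DX v) (Y x) + gL L x (X x) (DY v)" for v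
    unfolding dirD_def fa[OF gL_has_derivative[OF X Y x]] by simp
  have dX: "dirD X x v = DX v" and dY: "dirD Y x v = DY v" and dZ: "dirD Z x v = DZ v" for v
    unfolding dirD_def fa[OF X] fa[OF Y] fa[OF Z] by simp_all
  show ?thesis
    unfolding koszul_def e1 e2 e3 bracket_def dX dY dZ gL_diff_left
    using gL_sym[of L x "Y x" "DZ (X x)"] gL_sym[of L x "Z x" "DX (Y x)"] gL_sym[of L x "X x" "DY (Z x)"]
      dG_sym[of L x "Y x" "Z x" "X x"] dG_sym[of L x "X x" "Y x" "Z x"] dG_sym[of L x "Z x" "X x" "Y x"]
    by (simp add: algebra_simps)
qed

lemma X1_lin: "X1 y = y$1 *\<^sub>R vector [1,0,0]"
  by (simp add: X1_def vec_eq_iff forall_3)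
lemma X2_aff: "X2 y = y$1 *\<^sub>R vector [0,1,0] + vector [0,0,1]"
  by (simp add: X2_def vec_eq_iff forall_3)
lemma X3_lin: "X3 y = y$1 *\<^sub>R vector [0,1,0]"
  by (simp add: X3_def vec_eq_iff forall_3)
lemma X3t_lin: "X3t L y = (1 / sqrt L) *\<^sub>R (y$1 *\<^sub>R vector [0,1,0])"
  by (simp add: X3t_def X3_def vec_eq_iff forall_3)

lemma X1_hd: "(X1 has_derivative X1) F"
  unfolding X1_lin[abs_def]
  by (rule derivative_eq_intros refl has_derivative_id | simp)+
lemma X2_hd: "(X2 has_derivative X3) F"
  unfolding X2_aff[abs_def] X3_lin[abs_def]
  by (rule derivative_eq_intros refl has_derivative_id | simp)+
lemma X3t_hd: "(X3t L has_derivative X3t L) F"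
  unfolding X3t_lin[abs_def]
  by (rule derivative_eq_intros refl has_derivative_id | simp)+

lemma comb_hd:
  assumes "(g1 has_derivative D1) (at x)" "(g2 has_derivative D2) (at x)" "(g3 has_derivative D3) (at x)"
  shows "((\<lambda>y. comb L y (g1 y) (g2 y) (g3 y)) has_derivative
    (\<lambda>v. comb L x (D1 v) (D2 v) (D3 v) + g1 x *\<^sub>R X1 v + g2 x *\<^sub>R X3 v + g3 x *\<^sub>R X3t L v)) (at x)"
  unfolding comb_def
  by (rule derivative_eq_intros refl assms X1_hd X2_hd X3t_hd | simp add: algebra_simps)+

lemma E_comb: "X1 x = comb L x 1 0 0" "X2 x = comb L x 0 1 0" "X3t L x = comb L x 0 0 1"
  by (simp_all add: comb_def)

lemma LC_frame:
  assumes W: "(W has_derivative DW) (at x)"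
    and g: "(g1 has_derivative D1) (at x)" "(g2 has_derivative D2) (at x)" "(g3 has_derivative D3) (at x)"
    and S: "open S" "x \<in> S" "\<And>y. y \<in> S \<Longrightarrow> V y = comb L y (g1 y) (g2 y) (g3 y)"
    and x: "x$1 > 0" and L: "L > 0"
    and Wx: "W x = comb L x w1 w2 w3"
  shows "LC L W V x = comb L x
     (D1 (W x) + sqrt L / 2 * (w2 * g3 x + w3 * g2 x) + w3 * g3 x)
     (D2 (W x) - sqrt L / 2 * (w1 * g3 x + w3 * g1 x))
     (D3 (W x) + sqrt L / 2 * (w1 * g2 x - w2 * g1 x) - w3 * g1 x)"
proof -
  define DV where "DV = (\<lambda>v. comb L x (D1 v) (D2 v) (D3 v) + g1 x *\<^sub>R X1 v + g2 x *\<^sub>R X3 v + g3 x *\<^sub>R X3t L v)"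
  have V: "(V has_derivative DV) (at x)"
    unfolding DV_def
    by (rule has_derivative_transform_within_open[OF comb_hd[OF g] S(1,2)]) (simp add: S(3))
  have Vx: "V x = comb L x (g1 x) (g2 x) (g3 x)" using S by simp
  have x0: "x$1 \<noteq> 0" using x by simp
  define s where "s = sqrt L"
  have sp: "s > 0" using L by (simp add: s_def)
  have Ls: "L = s * s" using L by (simp add: s_def)
  have k1: "koszul L W V X1 x = D1 (W x) + sqrt L / 2 * (w2 * g3 x + w3 * g2 x) + w3 * g3 x"
    unfolding koszul_eq[OF W V X1_hd x0] DV_def Wx Vx s_def[symmetric]
    unfolding gL_def dG_def comb_nth X1_def X3_def X3t_def s_def[symmetric] vector_add_component vector_scaleR_component vector_3
    using x sp
    by (simp add: Ls field_simps power2_eq_square power3_eq_cube)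
  have k2: "koszul L W V X2 x = D2 (W x) - sqrt L / 2 * (w1 * g3 x + w3 * g1 x)"
    unfolding koszul_eq[OF W V X2_hd x0] DV_def Wx Vx s_def[symmetric]
    unfolding gL_def dG_def comb_nth X1_def X2_def X3_def X3t_def s_def[symmetric] vector_add_component vector_scaleR_component vector_3
    using x sp
    by (simp add: Ls field_simps power2_eq_square power3_eq_cube)
  have k3: "koszul L W V (X3t L) x = D3 (W x) + sqrt L / 2 * (w1 * g2 x - w2 * g1 x) - w3 * g1 x"
    unfolding koszul_eq[OF W V X3t_hd x0] DV_def Wx Vx s_def[symmetric]
    unfolding gL_def dG_def comb_nth X1_def X2_def X3_def X3t_def s_def[symmetric] vector_add_component vector_scaleR_component vector_3
    using x sp
    by (simp add: Ls field_simps power2_eq_square power3_eq_cube)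
  show ?thesis
    unfolding LC_def by (simp add: Efr_def k1 k2 k3 comb_def)
qed

lemma gL_comb_E:
  assumes "x$1 \<noteq> 0" "L > 0"
  shows "gL L x (comb L x a b c) (X1 x) = a" "gL L x (comb L x a b c) (X2 x) = b"
    "gL L x (comb L x a b c) (X3t L x) = c"
proof -
  have h: "X1 x = comb L x 1 0 0" "X2 x = comb L x 0 1 0" "X3t L x = comb L x 0 0 1"
    by (simp_all add: comb_def)
  show "gL L x (comb L x a b c) (X1 x) = a" by (subst h(1)) (simp add: gL_comb assms)
  show "gL L x (comb L x a b c) (X2 x) = b" by (subst h(2)) (simp add: gL_comb assms)
  show "gL L x (comb L x a b c) (X3t L x) = c" by (subst h(3)) (simp add: gL_comb assms)
qed
lemma P2_comb: "x$1 \<noteq> 0 \<Longrightarrow> L > 0 \<Longrightarrow> P2 L x (comb L x a b c) = comb L x 0 b c"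
  unfolding P2_def by (simp add: gL_comb_E) (simp add: comb_def)
lemma P2perp_comb: "x$1 \<noteq> 0 \<Longrightarrow> L > 0 \<Longrightarrow> P2perp L x (comb L x a b c) = comb L x a 0 0"
  unfolding P2perp_def by (simp add: gL_comb_E) (simp add: comb_def)
lemma comb_add: "comb L x a b c + comb L x a' b' c' = comb L x (a+a') (b+b') (c+c')"
  by (simp add: comb_def algebra_simps)
lemma comb_scale: "r *\<^sub>R comb L x a b c = comb L x (r*a) (r*b) (r*c)"
  by (simp add: comb_def algebra_simps)

lemma open_Mgrp: "open Mgrp"
  unfolding Mgrp_def by (intro open_Collect_less continuous_intros)

lemma II_gen:
  assumes W: "(W has_derivative DW) (at x)"
    and f: "(f1 has_derivative D1) (at x)" "(f2 has_derivative D2) (at x)" "(f3 has_derivative D3) (at x)"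
    and S: "open S" "x \<in> S" "\<And>y. y \<in> S \<Longrightarrow> V y = comb L y (f1 y) (f2 y) (f3 y)"
    and x: "x$1 > 0" and L: "L > 0"
    and Wx: "W x = comb L x w1 w2 w3"
  shows "gL L x (conn2 \<alpha> L W V x) (W x) = w1 * D1 (W x) + w2 * D2 (W x) + w3 * D3 (W x)
     + (1-\<alpha>) * (sqrt L / 2 * (w2 * f3 x + w3 * f2 x) * w1 + w3 * f3 x * w1)
     - sqrt L / 2 * w1 * f3 x * w2 - (1-\<alpha>) * sqrt L / 2 * w3 * f1 x * w2
     + sqrt L / 2 * w1 * f2 x * w3 - (1-\<alpha>) * sqrt L / 2 * w2 * f1 x * w3
     - (1-\<alpha>) * w3^2 * f1 x"
proof -
  have S': "open (S \<inter> Mgrp)" "x \<in> S \<inter> Mgrp" using S open_Mgrp x by (auto simp: Mgrp_def)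
  have c0: "((\<lambda>y. 0::real) has_derivative (\<lambda>v. 0)) (at x)" by (rule has_derivative_const)
  have e1: "LC L W V x = comb L x
     (D1 (W x) + sqrt L / 2 * (w2 * f3 x + w3 * f2 x) + w3 * f3 x)
     (D2 (W x) - sqrt L / 2 * (w1 * f3 x + w3 * f1 x))
     (D3 (W x) + sqrt L / 2 * (w1 * f2 x - w2 * f1 x) - w3 * f1 x)"
    by (rule LC_frame[OF W f S x L Wx])
  have e2: "LC L W (\<lambda>y. P2 L y (V y)) x = comb L x
     (0 + sqrt L / 2 * (w2 * f3 x + w3 * f2 x) + w3 * f3 x)
     (D2 (W x) - sqrt L / 2 * (w1 * f3 x + w3 * 0))
     (D3 (W x) + sqrt L / 2 * (w1 * f2 x - w2 * 0) - w3 * 0)"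
    by (rule LC_frame[OF W c0 f(2,3) S' _ x L Wx]) (use S L in \<open>auto simp: Mgrp_def P2_comb\<close>)
  have e3: "LC L W (\<lambda>y. P2perp L y (V y)) x = comb L x
     (D1 (W x) + sqrt L / 2 * (w2 * 0 + w3 * 0) + w3 * 0)
     (0 - sqrt L / 2 * (w1 * 0 + w3 * f1 x))
     (0 + sqrt L / 2 * (w1 * 0 - w2 * f1 x) - w3 * f1 x)"
    by (rule LC_frame[OF W f(1) c0 c0 S' _ x L Wx]) (use S L in \<open>auto simp: Mgrp_def P2perp_comb\<close>)
  have x0: "x$1 \<noteq> 0" using x by simp
  show ?thesis
    unfolding conn2_def e1 e2 e3 P2_comb[OF x0 L] P2perp_comb[OF x0 L] comb_scale comb_add Wx gL_comb[OF x0 L]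
    by (simp add: algebra_simps power2_eq_square) (simp add: field_simps)
qed



lemma lin_comb: "linear D \<Longrightarrow> D (comb L x a b c) = a * D (X1 x) + b * D (X2 x) + (c / sqrt L) * D (X3 x)"
  unfolding comb_def X3t_def by (simp add: linear_add linear_cmul)

lemma quot_hd:
  fixes P Q R F :: "real^3 \<Rightarrow> real"
  assumes hP: "(P has_derivative DP) (at x)" and hQ: "(Q has_derivative DQ) (at x)"
    and hR: "(R has_derivative DR) (at x)" and hF: "(F has_derivative DF) (at x)"
    and pos: "P x^2 + Q x^2 > 0" and M: "M = sqrt (P x^2 + Q x^2 + (t * R x)^2)"
  shows "((\<lambda>y. F y / sqrt (P y^2 + Q y^2 + (t * R y)^2)) has_derivative
   (\<lambda>v. DF v / M - F x * (P x * DP v + Q x * DQ v + t^2 * R x * DR v) / M^3)) (at x)"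
proof -
  have rp: "P x^2 + Q x^2 + (t * R x)^2 > 0" using pos by (simp add: add_pos_nonneg)
  have Mp: "M > 0" using rp M by simp
  have M2: "M^2 = P x^2 + Q x^2 + (t * R x)^2" using rp M by simp
  have hS: "((\<lambda>y. P y^2 + Q y^2 + (t * R y)^2) has_derivative
     (\<lambda>v. 2 * P x * DP v + 2 * Q x * DQ v + 2 * t^2 * R x * DR v)) (at x)"
    apply (rule derivative_eq_intros refl hP hQ hR)+
    apply (simp add: fun_eq_iff algebra_simps power2_eq_square)
    done
  have hM: "((\<lambda>y. sqrt (P y^2 + Q y^2 + (t * R y)^2)) has_derivative
     (\<lambda>v. (P x * DP v + Q x * DQ v + t^2 * R x * DR v) / M)) (at x)"
    apply (rule has_derivative_real_sqrt[OF rp hS, THEN has_derivative_eq_rhs])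
    using Mp unfolding M[symmetric] by (simp add: fun_eq_iff field_simps)
  show ?thesis
    apply (rule has_derivative_divide'[OF hF hM, THEN has_derivative_eq_rhs])
    unfolding M[symmetric] using Mp apply simp
  proof (rule ext)
    fix v
    show "(DF v * M - F x * ((P x * DP v + Q x * DQ v + t\<^sup>2 * R x * DR v) / M)) / (M * M) =
       DF v / M - F x * (P x * DP v + Q x * DQ v + t\<^sup>2 * R x * DR v) / M ^ 3"
      using Mp by (simp add: field_simps power3_eq_cube)
  qed
qed

lemma sumsq_hd:
  fixes P Q R :: "real^3 \<Rightarrow> real"
  assumes hP: "(P has_derivative DP) (at x)" and hQ: "(Q has_derivative DQ) (at x)"
    and hR: "(R has_derivative DR) (at x)"
  shows "((\<lambda>y. P y^2 + Q y^2 + (t * R y)^2) has_derivative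
     (\<lambda>v. 2 * P x * DP v + 2 * Q x * DQ v + 2 * t^2 * R x * DR v)) (at x)"
    apply (rule derivative_eq_intros refl hP hQ hR)+
    apply (simp add: fun_eq_iff algebra_simps power2_eq_square)
    done

lemma vec3_decomp: "(v::real^3) = v$1 *\<^sub>R axis 1 1 + v$2 *\<^sub>R axis 2 1 + v$3 *\<^sub>R axis 3 1"
  by (simp add: vec_eq_iff forall_3 axis_def)

lemma Du_formula:
  assumes "u differentiable (at y)"
  shows "dirD u y v = v$1 * pd 1 u y + v$2 * pd 2 u y + v$3 * pd 3 u y"
proof -
  have "linear (frechet_derivative u (at y))"
    using assms frechet_derivative_works has_derivative_linear by blast
  then show ?thesis
    unfolding dirD_def pd_def dirD_def
    by (subst vec3_decomp[of v]) (simp add: linear_add linear_cmul)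
qed

theorem proposition3p7:
  fixes u :: "real^3 \<Rightarrow> real" and U :: "(real^3) set" and \<alpha> :: real and x0 :: "real^3"
  assumes "open U" and "U \<subseteq> Mgrp"
    and "C2_on U u"
    and "compact {x\<in>U. u x = 0}"
    and "\<forall>x\<in>{x\<in>U. u x = 0}. egrad u x \<noteq> 0"
    and "x0 \<in> {x\<in>U. u x = 0}"
    and "hgrad u x0 \<noteq> 0"
  shows "((\<lambda>L. Hcurv \<alpha> L u x0) \<longlongrightarrow>
           dirD (pbar u) x0 (X1 x0) + dirD (qbar u) x0 (X2 x0) - (1 - \<alpha>) * pbar u x0) at_top"
proof -
  have x0U: "x0 \<in> U" using assms(6) by auto
  have xp: "x0$1 > 0" using assms(2) x0U by (auto simp: Mgrp_def)
  have diffU: "\<And>y. y \<in> U \<Longrightarrow> u differentiable (at y)" using assms(3) by (auto simp: C2_on_def)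
  have pdd: "\<And>i. pd i u differentiable (at x0)" using assms(3) x0U by (auto simp: C2_on_def)
  define Dd where "Dd i = frechet_derivative (pd i u) (at x0)" for i
  have hpd: "\<And>i. (pd i u has_derivative Dd i) (at x0)"
    using pdd frechet_derivative_works unfolding Dd_def by blast
  define P where "P y = y$1 * pd 1 u y" for y
  define Q where "Q y = y$1 * pd 2 u y + pd 3 u y" for y
  define R where "R y = y$1 * pd 2 u y" for y
  define DP where "DP v = v$1 * pd 1 u x0 + x0$1 * Dd 1 v" for v
  define DQ where "DQ v = v$1 * pd 2 u x0 + x0$1 * Dd 2 v + Dd 3 v" for v
  define DR where "DR v = v$1 * pd 2 u x0 + x0$1 * Dd 2 v" for v
  have hP: "(P has_derivative DP) (at x0)"
    unfolding P_def[abs_def] DP_def[abs_def]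
    by (rule derivative_eq_intros refl hpd has_derivative_id | simp add: fun_eq_iff algebra_simps)+
  have hQ: "(Q has_derivative DQ) (at x0)"
    unfolding Q_def[abs_def] DQ_def[abs_def]
    by (rule derivative_eq_intros refl hpd has_derivative_id | simp add: fun_eq_iff algebra_simps)+
  have hR: "(R has_derivative DR) (at x0)"
    unfolding R_def[abs_def] DR_def[abs_def]
    by (rule derivative_eq_intros refl hpd has_derivative_id | simp add: fun_eq_iff algebra_simps)+
  have ppU: "\<And>y. y \<in> U \<Longrightarrow> pp u y = P y"
    by (simp add: pp_def P_def Du_formula diffU X1_def)
  have qqU: "\<And>y. y \<in> U \<Longrightarrow> qq u y = Q y"
    by (simp add: qq_def Q_def Du_formula diffU X2_def)
  have rrU: "\<And>y. y \<in> U \<Longrightarrow> rr L u y = (1 / sqrt L) * R y" for L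
    by (simp add: rr_def R_def Du_formula diffU X3t_def X3_def)
  define p where "p = P x0"
  define q where "q = Q x0"
  define \<rho> where "\<rho> = R x0"
  have Pp: "P x0 = p" and Qq: "Q x0 = q" and Rr: "R x0 = \<rho>" by (simp_all add: p_def q_def \<rho>_def)
  have pos: "P x0^2 + Q x0^2 > 0"
  proof (rule ccontr)
    assume "\<not> P x0^2 + Q x0^2 > 0"
    then have "P x0 = 0" "Q x0 = 0" by (auto simp: sum_power2_gt_zero_iff)
    then have "hgrad u x0 = 0" using ppU[OF x0U] qqU[OF x0U] by (simp add: hgrad_def pp_def qq_def)
    then show False using assms(7) by simp
  qed
  define l where "l = sqrt (p^2 + q^2)"
  have lpos: "l > 0" using pos unfolding l_def Pp Qq by simp
  have l2: "l^2 = p^2 + q^2" using pos unfolding l_def Pp Qq by simp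
  have llx: "ll u x0 = l" by (simp add: ll_def l_def ppU[OF x0U] qqU[OF x0U] Pp Qq)
  have pbar0: "pbar u x0 = p / l" by (simp add: pbar_def llx ppU[OF x0U] Pp)
  have qbar0: "qbar u x0 = q / l" by (simp add: qbar_def llx qqU[OF x0U] Qq)
  have Ml: "l = sqrt (P x0^2 + Q x0^2 + (0 * R x0)^2)" by (simp add: l_def Pp Qq)
  have hpbar: "(pbar u has_derivative (\<lambda>v. DP v / l - P x0 * (P x0 * DP v + Q x0 * DQ v + 0^2 * R x0 * DR v) / l^3)) (at x0)"
    by (rule has_derivative_transform_within_open[OF quot_hd[OF hP hQ hR hP pos Ml] assms(1) x0U])
      (simp add: pbar_def ll_def ppU qqU)
  have hqbar: "(qbar u has_derivative (\<lambda>v. DQ v / l - Q x0 * (P x0 * DP v + Q x0 * DQ v + 0^2 * R x0 * DR v) / l^3)) (at x0)"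
    by (rule has_derivative_transform_within_open[OF quot_hd[OF hP hQ hR hQ pos Ml] assms(1) x0U])
      (simp add: qbar_def ll_def ppU qqU)
  have hll: "(ll u has_derivative (\<lambda>v. (P x0 * DP v + Q x0 * DQ v) / l)) (at x0)"
  proof -
    have "((\<lambda>y. sqrt (P y^2 + Q y^2)) has_derivative (\<lambda>v. (P x0 * DP v + Q x0 * DQ v) / l)) (at x0)"
      apply (rule has_derivative_real_sqrt[where g="\<lambda>y. P y^2 + Q y^2", OF pos, THEN has_derivative_eq_rhs])
       apply (rule derivative_eq_intros refl hP hQ)+
      using lpos unfolding l_def Pp Qq by (simp add: fun_eq_iff) (simp add: field_simps)
    then show ?thesis
      by (rule has_derivative_transform_within_open[OF _ assms(1) x0U]) (simp add: ll_def ppU qqU)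
  qed
  have lin: "linear DP" "linear DQ" "linear DR"
    using hP hQ hR has_derivative_linear by blast+
  define a1 where "a1 = DP (X1 x0)"
  define a2 where "a2 = DP (X2 x0)"
  define a3 where "a3 = DP (X3 x0)"
  define b1 where "b1 = DQ (X1 x0)"
  define b2 where "b2 = DQ (X2 x0)"
  define b3 where "b3 = DQ (X3 x0)"
  define c1 where "c1 = DR (X1 x0)"
  define c2 where "c2 = DR (X2 x0)"
  define c3 where "c3 = DR (X3 x0)"
  define S1 where "S1 t = p*((q/l)*a1 - (p/l)*a2) + q*((q/l)*b1 - (p/l)*b2) + t^2*\<rho>*((q/l)*c1 - (p/l)*c2)" for t
  define G1 where "G1 t m = (q/l) * (((q/l)*a1 - (p/l)*a2)/m - p*S1 t/m^3)
     + (-p/l) * (((q/l)*b1 - (p/l)*b2)/m - q*S1 t/m^3) - \<alpha>/2*(q/l)*(-p/l)*\<rho>/m" for t m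
  define w1 where "w1 t m = t*\<rho>/m*(p/l)" for t m
  define w2 where "w2 t m = t*\<rho>/m*(q/l)" for t m
  define w3 where "w3 m = -l/m" for m
  define A2 where "A2 t m = w1 t m * a1 + w2 t m * a2 + w3 m * t * a3" for t m
  define B2 where "B2 t m = w1 t m * b1 + w2 t m * b2 + w3 m * t * b3" for t m
  define C2 where "C2 t m = w1 t m * c1 + w2 t m * c2 + w3 m * t * c3" for t m
  define S2 where "S2 t m = p*A2 t m + q*B2 t m + t^2*\<rho>*C2 t m" for t m
  define G2 where "G2 t m = w1 t m*(A2 t m/m - p*S2 t m/m^3) + w2 t m*(B2 t m/m - q*S2 t m/m^3)
     + w3 m*(t*C2 t m/m - t*\<rho>*S2 t m/m^3)
     + (1-\<alpha>)*((1/2)*(w2 t m*(t*\<rho>/m) + w3 m*(q/m))*(\<rho>/m*(p/l)) + w3 m*(t*\<rho>/m)*w1 t m)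
     - (1/2)*(\<rho>/m*(p/l))*(t*\<rho>/m)*w2 t m - (1-\<alpha>)/2*w3 m*(p/m)*(\<rho>/m*(q/l))
     + (1/2)*(\<rho>/m*(p/l))*(q/m)*w3 m - (1-\<alpha>)/2*(\<rho>/m*(q/l))*(p/m)*w3 m
     - (1-\<alpha>)*(w3 m)^2*(p/m)" for t m
  have HL: "Hcurv \<alpha> L u x0 = G1 (1 / sqrt L) (llL L u x0) + G2 (1 / sqrt L) (llL L u x0)" if L: "L > 0" for L
  proof -
    define t where "t = 1 / sqrt L"
    define m where "m = llL L u x0"
    have Mm: "m = sqrt (P x0^2 + Q x0^2 + (t * R x0)^2)"
      by (simp add: m_def llL_def ppU[OF x0U] qqU[OF x0U] rrU[OF x0U] t_def)
    have mpos: "m > 0" using pos unfolding Mm by (simp add: add_pos_nonneg)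
    have hRt: "((\<lambda>y. t * R y) has_derivative (\<lambda>v. t * DR v)) (at x0)"
      by (rule derivative_eq_intros refl hR | simp)+
    have h1: "(pbarL L u has_derivative (\<lambda>v. DP v / m - P x0 * (P x0 * DP v + Q x0 * DQ v + t^2 * R x0 * DR v) / m^3)) (at x0)"
      by (rule has_derivative_transform_within_open[OF quot_hd[OF hP hQ hR hP pos Mm] assms(1) x0U])
        (simp add: pbarL_def llL_def ppU qqU rrU t_def)
    have h2: "(qbarL L u has_derivative (\<lambda>v. DQ v / m - Q x0 * (P x0 * DP v + Q x0 * DQ v + t^2 * R x0 * DR v) / m^3)) (at x0)"
      by (rule has_derivative_transform_within_open[OF quot_hd[OF hP hQ hR hQ pos Mm] assms(1) x0U])
        (simp add: qbarL_def llL_def ppU qqU rrU t_def)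
    have h3: "(rbarL L u has_derivative (\<lambda>v. t * DR v / m - t * R x0 * (P x0 * DP v + Q x0 * DQ v + t^2 * R x0 * DR v) / m^3)) (at x0)"
      by (rule has_derivative_transform_within_open[OF quot_hd[OF hP hQ hR hRt pos Mm] assms(1) x0U])
        (simp add: rbarL_def llL_def ppU qqU rrU t_def)
    have hllL: "\<exists>D. (llL L u has_derivative D) (at x0)"
    proof -
      have rp: "P x0^2 + Q x0^2 + (t * R x0)^2 > 0" using pos by (simp add: add_pos_nonneg)
      obtain D where hD: "((\<lambda>y. sqrt (P y^2 + Q y^2 + (t * R y)^2)) has_derivative D) (at x0)"
        using has_derivative_real_sqrt[OF rp sumsq_hd[OF hP hQ hR]] by blast
      have "(llL L u has_derivative D) (at x0)"
        by (rule has_derivative_transform_within_open[OF hD assms(1) x0U])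
          (simp add: llL_def ppU qqU rrU t_def)
      then show ?thesis by blast
    qed
    then obtain DllL where hllL: "(llL L u has_derivative DllL) (at x0)" by blast
    have "\<exists>D. (e1 u has_derivative D) (at x0)"
      unfolding e1_def[abs_def]
      using has_derivative_diff[OF has_derivative_scaleR[OF hqbar X1_hd] has_derivative_scaleR[OF hpbar X2_hd]]
      by blast
    then obtain De1 where de1: "(e1 u has_derivative De1) (at x0)" by blast
    have "\<exists>D. (e2 L u has_derivative D) (at x0)"
      unfolding e2_def[abs_def]
      using has_derivative_diff[OF has_derivative_add[OF has_derivative_scaleR[OF has_derivative_mult[OF h3 hpbar] X1_hd]
         has_derivative_scaleR[OF has_derivative_mult[OF h3 hqbar] X2_hd]]
         has_derivative_scaleR[OF has_derivative_divide[OF hll hllL] X3t_hd]] mpos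
      by (auto simp: m_def)
    then obtain De2 where de2: "(e2 L u has_derivative De2) (at x0)" by blast
    have vLc: "vL L u y = comb L y (pbarL L u y) (qbarL L u y) (rbarL L u y)" for y
      by (simp add: vL_def comb_def)
    have e1x: "e1 u x0 = comb L x0 (q/l) (-p/l) 0"
      by (simp add: e1_def comb_def pbar0 qbar0)
    have rb0: "rbarL L u x0 = t * \<rho> / m"
      by (simp add: rbarL_def rrU[OF x0U] m_def t_def Rr)
    have e2x: "e2 L u x0 = comb L x0 (t*\<rho>/m*(p/l)) (t*\<rho>/m*(q/l)) (-l/m)"
      by (simp add: e2_def comb_def pbar0 qbar0 rb0 llx m_def)
    note II1 = II_gen[OF de1 h1 h2 h3 open_UNIV UNIV_I vLc xp L e1x, of \<alpha>]
    note II2 = II_gen[OF de2 h1 h2 h3 open_UNIV UNIV_I vLc xp L e2x, of \<alpha>]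
    have v1: "pbarL L u x0 = p / m" by (simp add: pbarL_def m_def ppU[OF x0U] Pp)
    have v2: "qbarL L u x0 = q / m" by (simp add: qbarL_def m_def qqU[OF x0U] Qq)
    have sL: "sqrt L > 0" using L by simp
    define s where "s = sqrt L"
    have spos: "s > 0" using sL s_def by simp
    have eq1: "gL L x0 (conn2 \<alpha> L (e1 u) (vL L u) x0) (e1 u x0) = G1 t m"
      unfolding II1
      unfolding e1x lin_comb[OF lin(1)] lin_comb[OF lin(2)] lin_comb[OF lin(3)] v1 v2 rb0 Pp Qq Rr
        a1_def[symmetric] a2_def[symmetric] a3_def[symmetric] b1_def[symmetric] b2_def[symmetric]
        b3_def[symmetric] c1_def[symmetric] c2_def[symmetric] c3_def[symmetric] G1_def S1_def
      unfolding t_def using sL mpos lpos by (simp add: field_simps)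
    have d1: "DP (e2 L u x0) = A2 t m" and d2: "DQ (e2 L u x0) = B2 t m" and d3: "DR (e2 L u x0) = C2 t m"
      unfolding e2x lin_comb[OF lin(1)] lin_comb[OF lin(2)] lin_comb[OF lin(3)]
        a1_def[symmetric] a2_def[symmetric] a3_def[symmetric] b1_def[symmetric] b2_def[symmetric]
        b3_def[symmetric] c1_def[symmetric] c2_def[symmetric] c3_def[symmetric] A2_def B2_def C2_def
        w1_def w2_def w3_def
      by (simp_all add: t_def)
    have eq2: "gL L x0 (conn2 \<alpha> L (e2 L u) (vL L u) x0) (e2 L u x0) = G2 t m"
      unfolding II2
      unfolding d1 d2 d3
      unfolding e2x comb_nth v1 v2 rb0 Pp Qq Rr G2_def S2_def w1_def w2_def w3_def
      unfolding t_def s_def[symmetric] using spos mpos lpos by (simp add: field_simps)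
    show ?thesis
      using eq1 eq2 by (simp add: Hcurv_def IIf_def eframe_def t_def m_def)
  qed
  have ht: "((\<lambda>L::real. 1 / sqrt L) \<longlongrightarrow> 0) at_top"
    by (rule tendsto_divide_0[OF tendsto_const filterlim_at_top_imp_at_infinity[OF sqrt_at_top]])
  have mL: "llL L u x0 = sqrt (p^2 + q^2 + ((1 / sqrt L) * \<rho>)^2)" for L
    by (simp add: llL_def ppU[OF x0U] qqU[OF x0U] rrU[OF x0U] Pp Qq Rr)
  have hm: "((\<lambda>L. llL L u x0) \<longlongrightarrow> l) at_top"
  proof -
    have "((\<lambda>L. sqrt (p^2 + q^2 + ((1 / sqrt L) * \<rho>)^2)) \<longlongrightarrow> sqrt (p^2 + q^2 + (0 * \<rho>)^2)) at_top"
      by (intro tendsto_intros ht)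
    then show ?thesis unfolding mL by (simp add: l_def)
  qed
  have lim1: "((\<lambda>L. G1 (1 / sqrt L) (llL L u x0)) \<longlongrightarrow> G1 0 l) at_top"
    unfolding G1_def S1_def using lpos by (intro tendsto_intros ht hm) auto
  have lim2: "((\<lambda>L. G2 (1 / sqrt L) (llL L u x0)) \<longlongrightarrow> G2 0 l) at_top"
    unfolding G2_def S2_def A2_def B2_def C2_def w1_def w2_def w3_def using lpos
    by (intro tendsto_intros ht hm) auto
  have tg1: "dirD (pbar u) x0 (X1 x0) = a1 / l - p * (p * a1 + q * b1) / l^3"
    unfolding dirD_def frechet_derivative_at[OF hpbar, symmetric] by (simp add: Pp Qq a1_def b1_def)
  have tg2: "dirD (qbar u) x0 (X2 x0) = b2 / l - q * (p * a2 + q * b2) / l^3"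
    unfolding dirD_def frechet_derivative_at[OF hqbar, symmetric] by (simp add: Pp Qq a2_def b2_def)
  have final: "G1 0 l + G2 0 l = dirD (pbar u) x0 (X1 x0) + dirD (qbar u) x0 (X2 x0) - (1 - \<alpha>) * pbar u x0"
    unfolding tg1 tg2 pbar0 G1_def S1_def G2_def S2_def A2_def B2_def C2_def w1_def w2_def w3_def
    using lpos apply (simp add: field_simps power2_eq_square power3_eq_cube)
    using l2 by algebra
  have ev: "\<forall>\<^sub>F L in at_top. G1 (1 / sqrt L) (llL L u x0) + G2 (1 / sqrt L) (llL L u x0) = Hcurv \<alpha> L u x0"
    using eventually_gt_at_top[of 0] by eventually_elim (simp add: HL)
  show ?thesis
    using Lim_transform_eventually[OF tendsto_add[OF lim1 lim2] ev] unfolding final .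
qed

end
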